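(* Let $f_1,f_2,f_3$ be smooth nowhere-vanishing functions on $\mathbb R^3$ each depending only on $x^1$, $g=\frac{1}{f_1^2}dx^1\otimes dx^1+\frac{1}{f_2^2}dx^2\otimes dx^2+\frac{1}{f_3^2}dx^3\otimes dx^3$, and $V=\sum_{k=1}^3V^kE_k$ with $E_i=f_i\frac{\partial}{\partial x^i}$ and $V^1,V^2,V^3$ smooth functions depending only on $x^1$. Then $V$ is a Killing vector field of $(\mathbb R^3,g)$ if and only if one of the following holds: (i) $V^1=c_1\in\mathbb R\setminus\{0\}$, $V^2=c_2$, $V^3=c_3$ with $c_2,c_3\in\mathbb R$, and $f_2,f_3$ are constant; (ii) $V^1=0$, $V^2=\frac{c_2}{f_2}$, $V^3=\frac{c_3}{f_3}$ with $c_2,c_3\in\mathbb R$.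
   Context: $x^1,x^2,x^3$ are the standard coordinates on $\mathbb R^3$. A vector field $V$ is Killing if $\mathcal L_Vg=0$. *)

theory Defs
  imports "HOL-Analysis.Analysis"
begin

definition smooth_fun :: "(real \<Rightarrow> real) \<Rightarrow> bool" where
  "smooth_fun h \<longleftrightarrow> (\<forall>n x. ((deriv ^^ n) h) differentiable (at x))"

definition partial :: "3 \<Rightarrow> (real^3 \<Rightarrow> real) \<Rightarrow> real^3 \<Rightarrow> real" where
  "partial i F x = deriv (\<lambda>t. F (x + t *\<^sub>R axis i 1)) 0"

definition lie_deriv_metric ::
  "(real^3 \<Rightarrow> real^3) \<Rightarrow> (real^3 \<Rightarrow> real^3^3) \<Rightarrow> real^3 \<Rightarrow> 3 \<Rightarrow> 3 \<Rightarrow> real" where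
  "lie_deriv_metric W G x i j =
     (\<Sum>k\<in>UNIV. W x $ k * partial k (\<lambda>y. G y $ i $ j) x
               + G x $ k $ j * partial i (\<lambda>y. W y $ k) x
               + G x $ i $ k * partial j (\<lambda>y. W y $ k) x)"

definition killing :: "(real^3 \<Rightarrow> real^3) \<Rightarrow> (real^3 \<Rightarrow> real^3^3) \<Rightarrow> bool" where
  "killing W G \<longleftrightarrow> (\<forall>x i j. lie_deriv_metric W G x i j = 0)"

definition diag_metric :: "(3 \<Rightarrow> real \<Rightarrow> real) \<Rightarrow> real^3 \<Rightarrow> real^3^3" where
  "diag_metric f x = (\<chi> i j. if i = j then 1 / (f i (x $ 1))\<^sup>2 else 0)"

text \<open>V = sum_k V^k E_k with E_k = f_k d/dx^k, in coordinate components.\<close>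
definition frame_field :: "(3 \<Rightarrow> real \<Rightarrow> real) \<Rightarrow> (3 \<Rightarrow> real \<Rightarrow> real) \<Rightarrow> real^3 \<Rightarrow> real^3" where
  "frame_field f V x = (\<chi> k. V k (x $ 1) * f k (x $ 1))"

end

theory Submission imports Defs begin

lemma partial_gen:
  assumes "h differentiable (at (x$1))"
  shows "partial k (\<lambda>y. h (y$1)) x = (if k = 1 then deriv h (x$1) else 0)"
proof (cases "k = 1")
  case True
  have e: "(\<lambda>t. h ((x + t *\<^sub>R axis 1 1) $ 1)) = (\<lambda>t. h (t + x$1))"
    by (simp add: axis_def add.commute)
  have "(h has_field_derivative deriv h (x$1)) (at (0 + x$1))"
    using assms DERIV_deriv_iff_real_differentiable by simp
  then have "((\<lambda>t. h (t + x$1)) has_field_derivative deriv h (x$1)) (at 0)"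
    using DERIV_shift by blast
  then show ?thesis unfolding partial_def e True by (simp add: DERIV_imp_deriv)
next
  case False
  have e: "(\<lambda>t. h ((x + t *\<^sub>R axis k 1) $ 1)) = (\<lambda>t. h (x$1))"
    using False by (simp add: axis_def)
  show ?thesis unfolding partial_def e using False by simp
qed

lemma smooth_diff: "smooth_fun h \<Longrightarrow> h differentiable (at x)"
  unfolding smooth_fun_def by (metis funpow_0)

lemma deriv_inv_sq:
  assumes "smooth_fun h" "h t \<noteq> 0"
  shows "((\<lambda>s. 1 / (h s)\<^sup>2) has_field_derivative (-2 * deriv h t / (h t)^3)) (at t)"
proof -
  have d: "(h has_field_derivative deriv h t) (at t)"
    using smooth_diff[OF assms(1)] DERIV_deriv_iff_real_differentiable by blast
  have X: "((\<lambda>s. 1 / (h s)^2) has_field_derivative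
     (0 * (h t)^2 - 1 * (of_nat 2 * (deriv h t * (h t) ^ (2 - Suc 0)))) / ((h t)^2 * (h t)^2)) (at t)"
    by (rule DERIV_divide[OF DERIV_const DERIV_power[OF d]]) (use assms(2) in simp)
  have eq: "(0 * (h t)^2 - 1 * (of_nat 2 * (deriv h t * (h t) ^ (2 - Suc 0)))) / ((h t)^2 * (h t)^2)
     = -2 * deriv h t / (h t)^3"
    using assms(2) by (simp add: field_simps power2_eq_square power3_eq_cube)
  show ?thesis using X unfolding eq .
qed

lemma diff_inv_sq:
  assumes "smooth_fun h" "\<And>t. h t \<noteq> 0"
  shows "(\<lambda>s. 1 / (h s)\<^sup>2) differentiable (at t)"
  using deriv_inv_sq[OF assms(1) assms(2)] real_differentiable_def by blast

lemma diff_prod: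
  assumes "smooth_fun a" "smooth_fun b"
  shows "(\<lambda>s. a s * b s) differentiable (at t)"
  using smooth_diff[OF assms(1)] smooth_diff[OF assms(2)] by (simp add: differentiable_mult)

lemma lie_formula:
  fixes f V :: "3 \<Rightarrow> real \<Rightarrow> real"
  assumes f_smooth: "\<And>i. smooth_fun (f i)"
    and f_nz: "\<And>i t. f i t \<noteq> 0"
    and V_smooth: "\<And>i. smooth_fun (V i)"
  shows "lie_deriv_metric (frame_field f V) (diag_metric f) x i j =
    (\<Sum>k\<in>UNIV. V k (x$1) * f k (x$1) * (if k = 1 \<and> i = j then deriv (\<lambda>s. 1/(f i s)^2) (x$1) else 0)
       + (if k = j then 1/(f j (x$1))^2 else 0) * (if i = 1 then deriv (\<lambda>s. V k s * f k s) (x$1) else 0)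
       + (if i = k then 1/(f i (x$1))^2 else 0) * (if j = 1 then deriv (\<lambda>s. V k s * f k s) (x$1) else 0))"
  unfolding lie_deriv_metric_def
proof (rule sum.cong[OF refl])
  fix k
  have W: "\<And>m. (\<lambda>y. frame_field f V y $ m) = (\<lambda>y. (\<lambda>s. V m s * f m s) (y$1))"
    by (simp add: frame_field_def)
  have Wp: "\<And>m l. partial l (\<lambda>y. frame_field f V y $ m) x = (if l = 1 then deriv (\<lambda>s. V m s * f m s) (x$1) else 0)"
    unfolding W by (rule partial_gen) (use diff_prod assms in blast)
  have Gp: "partial k (\<lambda>y. diag_metric f y $ i $ j) x = (if k = 1 \<and> i = j then deriv (\<lambda>s. 1/(f i s)^2) (x$1) else 0)"
  proof (cases "i = j")
    case True
    have "(\<lambda>y. diag_metric f y $ i $ j) = (\<lambda>y. (\<lambda>s. 1/(f i s)^2) (y$1))"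
      using True by (simp add: diag_metric_def)
    then show ?thesis using partial_gen[OF diff_inv_sq[OF f_smooth f_nz]] True by simp
  next
    case False
    have "(\<lambda>y. diag_metric f y $ i $ j) = (\<lambda>y. (\<lambda>s. 0) (y$1))"
      using False by (simp add: diag_metric_def)
    then show ?thesis using partial_gen[of "\<lambda>s. 0"] False by simp
  qed
  show "frame_field f V x $ k * partial k (\<lambda>y. diag_metric f y $ i $ j) x +
         diag_metric f x $ k $ j * partial i (\<lambda>y. frame_field f V y $ k) x +
         diag_metric f x $ i $ k * partial j (\<lambda>y. frame_field f V y $ k) x = 
    V k (x$1) * f k (x$1) * (if k = 1 \<and> i = j then deriv (\<lambda>s. 1/(f i s)^2) (x$1) else 0)
       + (if k = j then 1/(f j (x$1))^2 else 0) * (if i = 1 then deriv (\<lambda>s. V k s * f k s) (x$1) else 0)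
       + (if i = k then 1/(f i (x$1))^2 else 0) * (if j = 1 then deriv (\<lambda>s. V k s * f k s) (x$1) else 0)"
    unfolding Gp Wp by (simp add: frame_field_def diag_metric_def)
qed
lemma pointwise:
  fixes f V :: "3 \<Rightarrow> real \<Rightarrow> real"
  assumes f_smooth: "\<And>i. smooth_fun (f i)"
    and f_nz: "\<And>i t. f i t \<noteq> 0"
    and V_smooth: "\<And>i. smooth_fun (V i)"
  shows "(\<forall>i j. (\<Sum>k\<in>UNIV. V k t * f k t * (if k = 1 \<and> i = j then deriv (\<lambda>s. 1/(f i s)^2) t else 0)
       + (if k = j then 1/(f j t)^2 else 0) * (if i = 1 then deriv (\<lambda>s. V k s * f k s) t else 0)
       + (if i = k then 1/(f i t)^2 else 0) * (if j = 1 then deriv (\<lambda>s. V k s * f k s) t else 0)) = 0)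
   \<longleftrightarrow> (deriv (V 1) t = 0 \<and> deriv (\<lambda>s. V 2 s * f 2 s) t = 0 \<and> deriv (\<lambda>s. V 3 s * f 3 s) t = 0
       \<and> (V 1 t = 0 \<or> deriv (f 2) t = 0) \<and> (V 1 t = 0 \<or> deriv (f 3) t = 0))"
proof -
  have dg: "\<And>i. deriv (\<lambda>s. 1/(f i s)^2) t = -2 * deriv (f i) t / (f i t)^3"
    using deriv_inv_sq[OF f_smooth f_nz] by (rule DERIV_imp_deriv)
  have dW1: "deriv (\<lambda>s. V 1 s * f 1 s) t = deriv (V 1) t * f 1 t + V 1 t * deriv (f 1) t"
  proof -
    have a: "(V 1 has_field_derivative deriv (V 1) t) (at t)"
      using smooth_diff[OF V_smooth] DERIV_deriv_iff_real_differentiable by blast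
    have b: "(f 1 has_field_derivative deriv (f 1) t) (at t)"
      using smooth_diff[OF f_smooth] DERIV_deriv_iff_real_differentiable by blast
    show ?thesis using DERIV_mult[OF a b] DERIV_imp_deriv by (simp add: mult.commute)
  qed
  have n1: "f 1 t \<noteq> 0" "f 2 t \<noteq> 0" "f 3 t \<noteq> 0" using f_nz by auto
  show ?thesis
    unfolding forall_3 sum_3 dg dW1
    using n1 by (simp add: field_simps power2_eq_square power3_eq_cube) blast
qed
lemma killing_iff:
  fixes f V :: "3 \<Rightarrow> real \<Rightarrow> real"
  assumes f_smooth: "\<And>i. smooth_fun (f i)"
    and f_nz: "\<And>i t. f i t \<noteq> 0"
    and V_smooth: "\<And>i. smooth_fun (V i)"
  shows "killing (frame_field f V) (diag_metric f) \<longleftrightarrow>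
    (\<forall>t. deriv (V 1) t = 0 \<and> deriv (\<lambda>s. V 2 s * f 2 s) t = 0 \<and> deriv (\<lambda>s. V 3 s * f 3 s) t = 0
       \<and> (V 1 t = 0 \<or> deriv (f 2) t = 0) \<and> (V 1 t = 0 \<or> deriv (f 3) t = 0))"
proof -
  have "killing (frame_field f V) (diag_metric f) \<longleftrightarrow> (\<forall>x::real^3. \<forall>i j. lie_deriv_metric (frame_field f V) (diag_metric f) x i j = 0)"
    unfolding killing_def by blast
  also have "\<dots> \<longleftrightarrow> (\<forall>x::real^3. deriv (V 1) (x$1) = 0 \<and> deriv (\<lambda>s. V 2 s * f 2 s) (x$1) = 0 \<and> deriv (\<lambda>s. V 3 s * f 3 s) (x$1) = 0
       \<and> (V 1 (x$1) = 0 \<or> deriv (f 2) (x$1) = 0) \<and> (V 1 (x$1) = 0 \<or> deriv (f 3) (x$1) = 0))"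
    unfolding lie_formula[OF assms] pointwise[OF assms] by simp
  also have "\<dots> \<longleftrightarrow> (\<forall>t. deriv (V 1) t = 0 \<and> deriv (\<lambda>s. V 2 s * f 2 s) t = 0 \<and> deriv (\<lambda>s. V 3 s * f 3 s) t = 0
       \<and> (V 1 t = 0 \<or> deriv (f 2) t = 0) \<and> (V 1 t = 0 \<or> deriv (f 3) t = 0))" (is "_ \<longleftrightarrow> (\<forall>t. ?Q t)")
  proof
    assume A: "\<forall>x::real^3. ?Q (x$1)"
    show "\<forall>t. ?Q t"
    proof
      fix t :: real
      show "?Q t" using A[rule_format, of "vec t"] by simp
    qed
  qed simp
  finally show ?thesis .
qed
lemma const_of_deriv:
  assumes "smooth_fun h" "\<And>t. deriv h t = 0"
  shows "h = (\<lambda>_. h 0)"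
proof
  fix x
  have "\<And>t. (h has_field_derivative 0) (at t)"
    using smooth_diff[OF assms(1)] DERIV_deriv_iff_real_differentiable assms(2) by metis
  then show "h x = h 0" by (intro DERIV_isconst_all allI)
qed

lemma smooth_prod:
  assumes "smooth_fun a" "smooth_fun b" "\<And>t. deriv (\<lambda>s. a s * b s) t = 0"
  shows "(\<lambda>s. a s * b s) = (\<lambda>_. a 0 * b 0)"
proof
  fix x
  have "\<And>t. ((\<lambda>s. a s * b s) has_field_derivative 0) (at t)"
    using diff_prod[OF assms(1,2)] DERIV_deriv_iff_real_differentiable assms(3) by metis
  then have "(\<lambda>s. a s * b s) x = (\<lambda>s. a s * b s) 0" by (intro DERIV_isconst_all allI)
  then show "a x * b x = a 0 * b 0" by simp
qed

theorem mainTheorem7: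
  fixes f V :: "3 \<Rightarrow> real \<Rightarrow> real"
  assumes f_smooth: "\<And>i. smooth_fun (f i)"
    and f_nz: "\<And>i t. f i t \<noteq> 0"
    and V_smooth: "\<And>i. smooth_fun (V i)"
  shows "killing (frame_field f V) (diag_metric f) \<longleftrightarrow>
    ((\<exists>c1 c2 c3. c1 \<noteq> 0 \<and> V 1 = (\<lambda>_. c1) \<and> V 2 = (\<lambda>_. c2) \<and> V 3 = (\<lambda>_. c3)
        \<and> (\<exists>a. f 2 = (\<lambda>_. a)) \<and> (\<exists>b. f 3 = (\<lambda>_. b)))
     \<or> (V 1 = (\<lambda>_. 0) \<and> (\<exists>c2 c3. V 2 = (\<lambda>t. c2 / f 2 t) \<and> V 3 = (\<lambda>t. c3 / f 3 t))))"
  unfolding killing_iff[OF assms]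
proof
  assume P: "\<forall>t. deriv (V 1) t = 0 \<and> deriv (\<lambda>s. V 2 s * f 2 s) t = 0 \<and> deriv (\<lambda>s. V 3 s * f 3 s) t = 0
       \<and> (V 1 t = 0 \<or> deriv (f 2) t = 0) \<and> (V 1 t = 0 \<or> deriv (f 3) t = 0)"
  define c1 where "c1 = V 1 0"
  have V1: "V 1 = (\<lambda>_. c1)" unfolding c1_def using const_of_deriv[OF V_smooth] P by blast
  define c2 where "c2 = V 2 0 * f 2 0"
  define c3 where "c3 = V 3 0 * f 3 0"
  have p2: "\<And>t. V 2 t * f 2 t = c2" unfolding c2_def using smooth_prod[OF V_smooth f_smooth] P by metis
  have p3: "\<And>t. V 3 t * f 3 t = c3" unfolding c3_def using smooth_prod[OF V_smooth f_smooth] P by metis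
  have V2: "V 2 = (\<lambda>t. c2 / f 2 t)"
  proof
    fix t show "V 2 t = c2 / f 2 t" using p2[of t] f_nz[of 2 t] by (simp add: field_simps)
  qed
  have V3: "V 3 = (\<lambda>t. c3 / f 3 t)"
  proof
    fix t show "V 3 t = c3 / f 3 t" using p3[of t] f_nz[of 3 t] by (simp add: field_simps)
  qed
  show "(\<exists>c1 c2 c3. c1 \<noteq> 0 \<and> V 1 = (\<lambda>_. c1) \<and> V 2 = (\<lambda>_. c2) \<and> V 3 = (\<lambda>_. c3)
        \<and> (\<exists>a. f 2 = (\<lambda>_. a)) \<and> (\<exists>b. f 3 = (\<lambda>_. b)))
     \<or> (V 1 = (\<lambda>_. 0) \<and> (\<exists>c2 c3. V 2 = (\<lambda>t. c2 / f 2 t) \<and> V 3 = (\<lambda>t. c3 / f 3 t)))"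
  proof (cases "c1 = 0")
    case True
    then show ?thesis using V1 V2 V3 by blast
  next
    case False
    have F2: "f 2 = (\<lambda>_. f 2 0)" using const_of_deriv[OF f_smooth] P V1 False by metis
    have F3: "f 3 = (\<lambda>_. f 3 0)" using const_of_deriv[OF f_smooth] P V1 False by metis
    have "V 2 = (\<lambda>_. c2 / f 2 0)" using V2 F2 by metis
    moreover have "V 3 = (\<lambda>_. c3 / f 3 0)" using V3 F3 by metis
    ultimately show ?thesis using V1 F2 F3 False by blast
  qed
next
  assume "(\<exists>c1 c2 c3. c1 \<noteq> 0 \<and> V 1 = (\<lambda>_. c1) \<and> V 2 = (\<lambda>_. c2) \<and> V 3 = (\<lambda>_. c3)
        \<and> (\<exists>a. f 2 = (\<lambda>_. a)) \<and> (\<exists>b. f 3 = (\<lambda>_. b)))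
     \<or> (V 1 = (\<lambda>_. 0) \<and> (\<exists>c2 c3. V 2 = (\<lambda>t. c2 / f 2 t) \<and> V 3 = (\<lambda>t. c3 / f 3 t)))"
  then show "\<forall>t. deriv (V 1) t = 0 \<and> deriv (\<lambda>s. V 2 s * f 2 s) t = 0 \<and> deriv (\<lambda>s. V 3 s * f 3 s) t = 0
       \<and> (V 1 t = 0 \<or> deriv (f 2) t = 0) \<and> (V 1 t = 0 \<or> deriv (f 3) t = 0)"
  proof
    assume "\<exists>c1 c2 c3. c1 \<noteq> 0 \<and> V 1 = (\<lambda>_. c1) \<and> V 2 = (\<lambda>_. c2) \<and> V 3 = (\<lambda>_. c3)
        \<and> (\<exists>a. f 2 = (\<lambda>_. a)) \<and> (\<exists>b. f 3 = (\<lambda>_. b))"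
    then obtain c1 c2 c3 a b where h: "V 1 = (\<lambda>_. c1)" "V 2 = (\<lambda>_. c2)" "V 3 = (\<lambda>_. c3)"
      "f 2 = (\<lambda>_. a)" "f 3 = (\<lambda>_. b)" by blast
    show ?thesis by (simp add: h)
  next
    assume "V 1 = (\<lambda>_. 0) \<and> (\<exists>c2 c3. V 2 = (\<lambda>t. c2 / f 2 t) \<and> V 3 = (\<lambda>t. c3 / f 3 t))"
    then obtain c2 c3 where h: "V 1 = (\<lambda>_. 0)" "V 2 = (\<lambda>t. c2 / f 2 t)" "V 3 = (\<lambda>t. c3 / f 3 t)" by blast
    have e2: "(\<lambda>s. V 2 s * f 2 s) = (\<lambda>_. c2)" using h(2) f_nz by auto
    have e3: "(\<lambda>s. V 3 s * f 3 s) = (\<lambda>_. c3)" using h(3) f_nz by auto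
    show ?thesis by (simp add: h(1) e2 e3)
  qed
qed
end
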